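(* Let $S$ be an infinite set and $\mathcal{F}\subseteq 2^S$ countable, nontrivial, and closed under finite unions and finite intersections. Let $A,C\subseteq S$ with $A$ infinite, $C$ infinite, $S\setminus C$ infinite, $A\cap C=\emptyset$, and $A\notin\mathit{cclass}_1(C,\mathcal{F})$. Then there exists $B\subseteq A$ with $B\in\mathit{ccore}_1(C,\mathcal{F})$.
   Context: $\mathcal{F}$ is nontrivial if $\emptyset,S\in\mathcal{F}$ and for all $Q\in\mathcal{F}$ and finite $E\subseteq S$ both $Q\cup E\in\mathcal{F}$ and $Q\setminus E\in\mathcal{F}$. For $C\subseteq S$ and an infinite $A\subseteq S\setminus C$: $A\in\mathit{cclass}_1(C,\mathcal{F})$ iff there is $Q\in\mathcal{F}$ with $S\setminus Q\in\mathcal{F}$, $C\subseteq Q$ and $A\subseteq S\setminus Q$; $B\in\mathit{ccore}_1(C,\mathcal{F})$ iff $B$ is an infinite subset of $S\setminus C$ and every infinite $B'\subseteq B$ satisfies $B'\notin\mathit{cclass}_1(C,\mathcal{F})$. *)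

theory Defs
  imports Main "HOL-Library.Countable_Set"
begin

definition nontrivial :: "'a set \<Rightarrow> 'a set set \<Rightarrow> bool" where
  "nontrivial S F \<longleftrightarrow> {} \<in> F \<and> S \<in> F \<and>
     (\<forall>Q\<in>F. \<forall>E. finite E \<and> E \<subseteq> S \<longrightarrow> Q \<union> E \<in> F \<and> Q - E \<in> F)"

definition cclass1 :: "'a set \<Rightarrow> 'a set \<Rightarrow> 'a set set \<Rightarrow> 'a set set" where
  "cclass1 S C F = {A. A \<subseteq> S - C \<and> infinite A \<and>
     (\<exists>Q\<in>F. S - Q \<in> F \<and> C \<subseteq> Q \<and> A \<subseteq> S - Q)}"

definition ccore1 :: "'a set \<Rightarrow> 'a set \<Rightarrow> 'a set set \<Rightarrow> 'a set set" where
  "ccore1 S C F = {B. B \<subseteq> S - C \<and> infinite B \<and>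
     (\<forall>B'. B' \<subseteq> B \<and> infinite B' \<longrightarrow> B' \<notin> cclass1 S C F)}"

end

theory Submission
  imports Defs
begin

lemma inj_seq:
  fixes T :: "nat \<Rightarrow> 'a set"
  assumes inf: "\<And>n. infinite (T n)"
  shows "\<exists>b. inj b \<and> (\<forall>n. b n \<in> T n)"
proof -
  define L where "L = rec_nat [] (\<lambda>n l. l @ [SOME x. x \<in> T n - set l])"
  define b where "b n = (SOME x. x \<in> T n - set (L n))" for n
  have L0: "L 0 = []" by (simp add: L_def)
  have LS: "L (Suc n) = L n @ [b n]" for n by (simp add: L_def b_def)
  have len: "length (L n) = n" for n by (induction n) (simp_all add: L0 LS)
  have ex: "b n \<in> T n - set (L n)" for n
  proof -
    have "infinite (T n - set (L n))" using inf[of n] by simp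
    then have "T n - set (L n) \<noteq> {}" by (metis finite.emptyI)
    then show ?thesis unfolding b_def by (metis ex_in_conv someI_ex)
  qed
  have pre: "m < n \<Longrightarrow> L n ! m = b m" for m n
  proof (induction n)
    case 0 then show ?case by simp
  next
    case (Suc n)
    then show ?case by (cases "m < n") (auto simp: LS nth_append len less_Suc_eq)
  qed
  have "inj b"
  proof (rule injI)
    fix x y assume e: "b x = b y"
    show "x = y"
    proof (rule ccontr)
      assume "x \<noteq> y"
      then consider "x < y" | "y < x" by linarith
      then show False
      proof cases
        case 1
        then have "b x \<in> set (L y)" using pre[of x y] len by (metis nth_mem)
        then show False using ex[of y] e by auto
      next
        case 2
        then have "b y \<in> set (L x)" using pre[of y x] len by (metis nth_mem)
        then show False using ex[of x] e by auto
      qed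
    qed
  qed
  then show ?thesis using ex by blast
qed

theorem lemma4p5:
  fixes S :: "'a set" and F :: "'a set set" and A C :: "'a set"
  assumes "infinite S"
    and "F \<subseteq> Pow S"
    and "countable F"
    and "nontrivial S F"
    and "\<And>X Y. X \<in> F \<Longrightarrow> Y \<in> F \<Longrightarrow> X \<union> Y \<in> F"
    and "\<And>X Y. X \<in> F \<Longrightarrow> Y \<in> F \<Longrightarrow> X \<inter> Y \<in> F"
    and "A \<subseteq> S" and "C \<subseteq> S"
    and "infinite A" and "infinite C" and "infinite (S - C)"
    and "A \<inter> C = {}"
    and "A \<notin> cclass1 S C F"
  shows "\<exists>B. B \<subseteq> A \<and> B \<in> ccore1 S C F"
proof -
  define D where "D = {Q\<in>F. S - Q \<in> F \<and> C \<subseteq> Q}"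
  have nt: "{} \<in> F" "S \<in> F" "\<And>Q E. Q \<in> F \<Longrightarrow> finite E \<Longrightarrow> E \<subseteq> S \<Longrightarrow> Q - E \<in> F"
    "\<And>Q E. Q \<in> F \<Longrightarrow> finite E \<Longrightarrow> E \<subseteq> S \<Longrightarrow> Q \<union> E \<in> F"
    using assms(4) unfolding nontrivial_def by auto
  have SD: "S \<in> D" using nt assms(8) by (simp add: D_def)
  have cD: "countable D" using assms(3) by (simp add: D_def)
  have intD: "Q1 \<inter> Q2 \<in> D" if "Q1 \<in> D" "Q2 \<in> D" for Q1 Q2
  proof -
    have "S - (Q1 \<inter> Q2) = (S - Q1) \<union> (S - Q2)" by auto
    then show ?thesis using that assms(5,6) by (auto simp: D_def)
  qed
  have infD: "infinite (A \<inter> Q)" if "Q \<in> D" for Q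
  proof
    assume fin: "finite (A \<inter> Q)"
    let ?Q = "Q - (A \<inter> Q)"
    have QF: "?Q \<in> F" using nt(3)[OF _ fin] that assms(7) by (auto simp: D_def)
    have "S - ?Q = (S - Q) \<union> (A \<inter> Q)" using assms(7) by auto
    moreover have "S - Q \<union> (A \<inter> Q) \<in> F" using nt(4)[OF _ fin] that assms(7) by (auto simp: D_def)
    ultimately have SQ: "S - ?Q \<in> F" by simp
    moreover have "C \<subseteq> ?Q" using that assms(12) by (auto simp: D_def)
    moreover have "A \<subseteq> S - ?Q" using assms(7) by auto
    ultimately have "A \<in> cclass1 S C F" using QF assms(7,9,12) unfolding cclass1_def by blast
    then show False using assms(13) by simp
  qed
  define Q where "Q = from_nat_into D"
  have rQ: "range Q = D" unfolding Q_def using SD cD using range_from_nat_into[of D] by blast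
  define P where "P n = \<Inter> (Q ` {..n})" for n
  have PD: "P n \<in> D" for n
  proof (induction n)
    case 0 then show ?case using rQ by (auto simp: P_def)
  next
    case (Suc n)
    have "P (Suc n) = Q (Suc n) \<inter> P n" by (auto simp: P_def atMost_Suc)
    then show ?case using intD Suc rQ by auto
  qed
  have "\<And>n. infinite (A \<inter> P n)" using infD PD by simp
  then obtain b where b: "inj b" "\<And>n. b n \<in> A \<inter> P n" using inj_seq[of "\<lambda>n. A \<inter> P n"] by metis
  define B where "B = range b"
  have BA: "B \<subseteq> A" using b by (auto simp: B_def)
  have "B \<in> ccore1 S C F"
    unfolding ccore1_def
  proof (intro CollectI conjI allI impI)
    show "B \<subseteq> S - C" using BA assms(7,12) by auto
    show "infinite B" unfolding B_def using b(1) range_inj_infinite by blast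
    fix B' assume B': "B' \<subseteq> B \<and> infinite B'"
    show "B' \<notin> cclass1 S C F"
    proof
      assume "B' \<in> cclass1 S C F"
      then obtain Q' where Q': "Q' \<in> F" "S - Q' \<in> F" "C \<subseteq> Q'" "B' \<subseteq> S - Q'"
        unfolding cclass1_def by blast
      then have "Q' \<in> D" by (simp add: D_def)
      then obtain k where k: "Q' = Q k" using rQ by blast
      have "B' \<subseteq> b ` {..<k}"
      proof
        fix x assume x: "x \<in> B'"
        then obtain n where n: "x = b n" using B' B_def by auto
        have "\<not> k \<le> n"
        proof
          assume "k \<le> n"
          then have "P n \<subseteq> Q k" by (auto simp: P_def)
          then show False using b(2)[of n] n x Q'(4) k by auto
        qed
        then show "x \<in> b ` {..<k}" using n by auto
      qed
      then show False using B' finite_subset by blast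
    qed
  qed
  then show ?thesis using BA by blast
qed

end
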